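(* Let $\xi$ be a quadratic irrational real number and let $n\ge1$ be an integer. There is a constant $c>0$, depending only on $\xi$ and $n$, such that for every algebraic integer $\alpha$ of degree $n+1$ whose conjugates $\alpha_1,\dots,\alpha_{n+1}$ are all distinct from $\xi$, and for every ordering of these conjugates, one has \[ \max_{1\le i\le n} |\xi-\alpha_i| \ge c\, H(\alpha)^{-2/n}. \]
   Context: The height $H(\alpha)$ of an algebraic number $\alpha\in\mathbb{C}$ is the largest absolute value of the coefficients of its irreducible (minimal) polynomial in $\mathbb{Z}[T]$. The conjugates of $\alpha$ are the roots of this polynomial. An algebraic integer is a root of a monic polynomial in $\mathbb{Z}[T]$. *)

theory Defs
  imports "HOL-Computational_Algebra.Computational_Algebra"
begin

definition min_int_poly :: "complex \<Rightarrow> int poly" where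
  "min_int_poly \<alpha> = (THE p. irreducible p \<and> lead_coeff p > 0 \<and>
       poly (map_poly of_int p) \<alpha> = 0)"

definition height :: "complex \<Rightarrow> int" where
  "height \<alpha> = Max ((\<lambda>i. \<bar>coeff (min_int_poly \<alpha>) i\<bar>) ` {..degree (min_int_poly \<alpha>)})"

definition conjugates :: "complex \<Rightarrow> complex set" where
  "conjugates \<alpha> = {z. poly (map_poly of_int (min_int_poly \<alpha>)) z = 0}"

definition algebraic_degree :: "complex \<Rightarrow> nat" where
  "algebraic_degree \<alpha> = degree (min_int_poly \<alpha>)"

definition algebraic_integer :: "complex \<Rightarrow> bool" where
  "algebraic_integer \<alpha> \<longleftrightarrow> (\<exists>p :: int poly. lead_coeff p = 1 \<and> poly (map_poly of_int p) \<alpha> = 0)"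

definition quadratic_irrational :: "real \<Rightarrow> bool" where
  "quadratic_irrational \<xi> \<longleftrightarrow> \<xi> \<notin> \<rat> \<and>
     (\<exists>p :: int poly. degree p = 2 \<and> poly (map_poly of_int p) \<xi> = 0)"

end

theory Submission
  imports Defs "Subresultants.Subresultant_Gcd"
begin

lemma const_no_root:
  fixes m :: "int poly" and z :: complex
  assumes "m \<noteq> 0" "degree m = 0"
  shows "poly (of_int_poly m) z \<noteq> 0"
proof -
  from assms obtain c where "m = [:c:]" "c \<noteq> 0" by (metis degree_eq_zeroE pCons_0_0)
  then show ?thesis by simp
qed

lemma unit_no_root:
  fixes u :: "int poly" and z :: complex
  assumes "is_unit u"
  shows "poly (of_int_poly u) z \<noteq> 0"
  using assms by (metis const_no_root is_unit_poly_iff degree_pCons_0 not_is_unit_0)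

lemma exists_irr:
  assumes "algebraic_integer \<alpha>"
  shows "\<exists>q. irreducible q \<and> lead_coeff q = 1 \<and> poly (of_int_poly q) \<alpha> = 0"
proof -
  from assms obtain f :: "int poly" where f: "lead_coeff f = 1" "poly (of_int_poly f) \<alpha> = 0"
    unfolding algebraic_integer_def by auto
  have f0: "f \<noteq> 0" using f by auto
  have "normalize f = f" using f by (simp add: normalize_monic)
  define X where "X = prod_mset (prime_factorization f)"
  have "normalize X = f" using prod_mset_prime_factorization_weak[OF f0] \<open>normalize f = f\<close> X_def by simp
  hence "X = unit_factor X * f" by (metis unit_factor_mult_normalize)
  hence "poly (of_int_poly X) \<alpha> = poly (of_int_poly (unit_factor X)) \<alpha> * poly (of_int_poly f) \<alpha>"
    by (metis of_int_poly_hom.hom_mult poly_mult)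
  hence "poly (of_int_poly (prod_mset (prime_factorization f))) \<alpha> = 0" using f X_def by simp
  moreover have "poly (of_int_poly (prod_mset (prime_factorization f))) \<alpha> =
      (\<Prod>q\<in>#prime_factorization f. poly (of_int_poly q) \<alpha>)"
    by (simp only: of_int_poly_hom.hom_prod_mset poly_prod_mset)
  ultimately have "prod_mset (image_mset (\<lambda>q. poly (of_int_poly q) \<alpha>) (prime_factorization f)) = 0"
    by simp
  then obtain q where q: "q \<in># prime_factorization f" "poly (of_int_poly q) \<alpha> = 0"
    by (auto simp: prod_mset_zero_iff)
  from q have pq: "prime q" "q dvd f" by (auto simp: in_prime_factors_iff)
  then obtain t where t: "f = q * t" by (auto elim: dvdE)
  have "lead_coeff q * lead_coeff t = 1" using f t by (simp add: lead_coeff_mult)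
  hence lq: "\<bar>lead_coeff q\<bar> = 1" using zdvd1_eq by (metis dvd_triv_left)
  have "normalize q = q" using pq prime_def by blast
  moreover have q0: "q \<noteq> 0" using pq by auto
  ultimately have "unit_factor q = 1" using unit_factor_normalize by metis
  hence "unit_factor (lead_coeff q) = 1" by (simp add: unit_factor_poly_def)
  hence "lead_coeff q = 1" using lq by (auto simp: sgn_if split: if_splits)
  moreover have "irreducible q" using pq by (simp add: prime_elem_imp_irreducible prime_def)
  ultimately show ?thesis using q by auto
qed
lemma pseudo_root_dvd:
  fixes m f :: "int poly" and \<alpha> :: complex
  assumes m0: "m \<noteq> 0" and mr: "poly (of_int_poly m) \<alpha> = 0"
    and mmin: "\<And>g. g \<noteq> 0 \<Longrightarrow> poly (of_int_poly g) \<alpha> = 0 \<Longrightarrow> degree m \<le> degree g"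
    and fr: "poly (of_int_poly f) \<alpha> = 0"
  shows "\<exists>a t. a \<noteq> 0 \<and> Polynomial.smult a f = m * t"
proof -
  define r where "r = pseudo_mod f m"
  from pseudo_mod[OF m0, of f] obtain a t where at: "a \<noteq> 0" "Polynomial.smult a f = m * t + r"
    and rd: "r = 0 \<or> degree r < degree m" unfolding r_def by blast
  have "poly (of_int_poly (Polynomial.smult a f)) \<alpha> = poly (of_int_poly (m * t + r)) \<alpha>" using at by simp
  hence "poly (of_int_poly r) \<alpha> = 0" using fr mr
    by (simp add: of_int_poly_hom.hom_mult of_int_poly_hom.hom_add of_int_hom.map_poly_hom_smult)
  hence "r = 0" using rd mmin by force
  thus ?thesis using at by auto
qed

lemma unique_irr:
  fixes p q :: "int poly" and \<alpha> :: complex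
  assumes p: "irreducible p" "lead_coeff p > 0" "poly (of_int_poly p) \<alpha> = 0"
  and q: "irreducible q" "lead_coeff q > 0" "poly (of_int_poly q) \<alpha> = 0"
  shows "p = q"
proof -
  define S where "S = {g :: int poly. g \<noteq> 0 \<and> poly (of_int_poly g) \<alpha> = 0}"
  have "p \<in> S" using p by (auto simp: S_def)
  define d where "d = (LEAST k. \<exists>g\<in>S. degree g = k)"
  have "\<exists>g\<in>S. degree g = d" unfolding d_def by (rule LeastI_ex) (use \<open>p \<in> S\<close> in blast)
  then obtain m where m: "m \<in> S" "degree m = d" by blast
  have mmin: "\<And>g. g \<noteq> 0 \<Longrightarrow> poly (of_int_poly g) \<alpha> = 0 \<Longrightarrow> degree m \<le> degree g"
    unfolding m(2) d_def by (rule Least_le) (auto simp: S_def)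
  have m0: "m \<noteq> 0" and mr: "poly (of_int_poly m) \<alpha> = 0" using m by (auto simp: S_def)
  have key: "r dvd m" if r: "irreducible r" "poly (of_int_poly r) \<alpha> = 0" for r
  proof -
    from pseudo_root_dvd[OF m0 mr mmin r(2)] obtain a t where at: "a \<noteq> 0" "Polynomial.smult a r = m * t" by blast
    have pr: "prime_elem r" using r(1) by (simp add: irreducible_imp_prime_poly)
    have "r dvd Polynomial.smult a r" by (intro dvd_smult) simp
    hence "r dvd m * t" by (simp only: at)
    hence "r dvd m \<or> r dvd t" using pr prime_elem_dvd_mult_iff by blast
    moreover have "\<not> r dvd t"
    proof
      assume "r dvd t"
      then obtain s where s: "t = r * s" by (auto elim: dvdE)
      have r0: "r \<noteq> 0" using r by auto
      have "r * [:a:] = r * (m * s)" using at s by (simp add: algebra_simps)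
      hence "[:a:] = m * s" using r0 mult_left_cancel by blast
      hence "degree m = 0" using at(1) by (metis degree_mult_eq degree_pCons_0 m0 add_is_0 mult_zero_right pCons_eq_0_iff)
      thus False using const_no_root[OF m0] mr by blast
    qed
    ultimately show ?thesis by blast
  qed
  have nc: "degree r \<noteq> 0" if "r \<noteq> 0" "poly (of_int_poly r) \<alpha> = 0" for r :: "int poly"
    using const_no_root that by blast
  have p0: "p \<noteq> 0" and q0: "q \<noteq> 0" using p q by auto
  have "p dvd m" using key p by blast
  then obtain u where u: "m = p * u" by (auto elim: dvdE)
  have u0: "u \<noteq> 0" using u m0 by auto
  have "degree m \<le> degree p" using mmin p0 p(3) by blast
  hence "degree u = 0" using u p0 u0 by (simp add: degree_mult_eq)
  then obtain c where c: "u = [:c:]" by (metis degree_eq_zeroE)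
  have "q dvd p * u" using key q u by metis
  hence "q dvd p \<or> q dvd u" using q(1) irreducible_imp_prime_poly prime_elem_dvd_mult_iff by blast
  moreover have "\<not> q dvd u"
  proof
    assume "q dvd u"
    hence "degree q \<le> degree u" using u0 by (rule dvd_imp_degree_le)
    thus False using nc[OF q0 q(3)] \<open>degree u = 0\<close> by simp
  qed
  ultimately have "q dvd p" by blast
  then obtain w where w: "p = q * w" by (auto elim: dvdE)
  have w0: "w \<noteq> 0" using w p0 by auto
  have "degree m \<le> degree q" using mmin q0 q(3) by blast
  hence "degree p \<le> degree q" using u u0 p0 by (simp add: degree_mult_eq)
  hence "degree w = 0" using w q0 w0 by (simp add: degree_mult_eq)
  have "\<not> is_unit q" using unit_no_root q(3) by blast
  hence "is_unit w" using p(1) w irreducibleD by blast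
  then obtain e where e: "w = [:e:]" "is_unit e" using is_unit_poly_iff by blast
  have "lead_coeff p = lead_coeff q * e" using w e by (simp add: lead_coeff_mult)
  hence "e = 1" using e p(2) q(2) zdvd1_eq
    by (smt (verit) mult_minus_right mult_cancel_left1)
  thus ?thesis using w e by simp
qed

lemma minpoly_props:
  assumes "algebraic_integer \<alpha>"
  shows "irreducible (min_int_poly \<alpha>) \<and> lead_coeff (min_int_poly \<alpha>) = 1 \<and>
         poly (of_int_poly (min_int_poly \<alpha>)) \<alpha> = 0"
proof -
  obtain q where q: "irreducible q" "lead_coeff q = 1" "poly (of_int_poly q) \<alpha> = 0"
    using exists_irr[OF assms] by blast
  have "min_int_poly \<alpha> = q" unfolding min_int_poly_def
  proof (rule the_equality)
    show "irreducible q \<and> lead_coeff q > 0 \<and> poly (of_int_poly q) \<alpha> = 0" using q by simp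
    fix p assume "irreducible p \<and> lead_coeff p > 0 \<and> poly (of_int_poly p) \<alpha> = 0"
    thus "p = q" using unique_irr[of p \<alpha> q] q by auto
  qed
  thus ?thesis using q by simp
qed

lemma poly_prod_roots:
  fixes p :: "complex poly"
  assumes lc: "lead_coeff p = 1" and cd: "card {z. poly p z = 0} = degree p"
  shows "poly p x = (\<Prod>z\<in>{z. poly p z = 0}. x - z)"
proof -
  define S where "S = {z. poly p z = 0}"
  define M where "M = proots p"
  have p0: "p \<noteq> 0" using lc by auto
  have setM: "set_mset M = S" unfolding M_def S_def using set_count_proots[OF p0] .
  have fin: "finite S" unfolding S_def using poly_roots_finite[OF p0] .
  have sz: "size M = card S" unfolding M_def S_def using size_proots_complex cd by simp
  have c1: "\<forall>z\<in>S. 1 \<le> count M z" using setM by (metis One_nat_def Suc_leI count_greater_zero_iff)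
  have cnt: "\<forall>z\<in>S. count M z = 1"
  proof (rule ccontr)
    assume "\<not> (\<forall>z\<in>S. count M z = 1)"
    then obtain z0 where z0: "z0 \<in> S" "count M z0 \<noteq> 1" by blast
    moreover have "1 \<le> count M z0" using c1 z0(1) by blast
    ultimately have "1 < count M z0" by linarith
    note z0 = z0(1) this
    hence "(\<Sum>z\<in>S. (1::nat)) < (\<Sum>z\<in>S. count M z)"
      using fin c1 by (intro sum_strict_mono_ex1) auto
    thus False using sz setM size_multiset_overloaded_eq[of M] by simp
  qed
  have "p = Polynomial.smult (lead_coeff p) (\<Prod>x\<in>#proots p. [:-x, 1:])"
    using complex_poly_decompose_multiset[of p] by simp
  hence "poly p x = (\<Prod>y\<in>#M. poly [:-y, 1:] x)" using lc M_def
    by (metis poly_prod_mset smult_1_left)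
  also have "\<dots> = (\<Prod>y\<in>set_mset M. (poly [:-y, 1:] x) ^ count M y)"
    by (rule image_prod_mset_multiplicity)
  also have "\<dots> = (\<Prod>y\<in>S. x - y)" using setM cnt by (intro prod.cong) auto
  finally show ?thesis unfolding S_def .
qed

lemma poly_of_real_int:
  "poly (of_int_poly p :: complex poly) (of_real x) = of_real (poly (of_int_poly p) x)"
  by (induct p) (simp_all add: map_poly_pCons)

lemma root_bound:
  fixes p :: "int poly" and z :: complex
  assumes lc: "lead_coeff p = 1" and hc: "\<And>i. \<bar>coeff p i\<bar> \<le> H"
    and r: "poly (of_int_poly p) z = 0"
  shows "cmod z \<le> real (degree p) * H"
proof -
  define d where "d = degree p"
  have H1: "1 \<le> H" using hc[of "degree p"] lc by simp
  have p0: "p \<noteq> 0" using lc by (metis leading_coeff_0_iff zero_neq_one)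
  have "degree (of_int_poly p :: complex poly) = d" unfolding d_def using lc p0
    by (intro degree_map_poly) simp
  hence pe: "poly (of_int_poly p) z = (\<Sum>i\<le>d. of_int (coeff p i) * z^i)"
    by (simp add: poly_altdef coeff_map_poly)
  have d0: "d \<noteq> 0"
  proof
    assume "d = 0"
    hence "poly (of_int_poly p) z = 1" using pe lc d_def by simp
    thus False using r by simp
  qed
  show ?thesis
  proof (cases "cmod z \<le> 1")
    case True
    have "(1::real) \<le> real d" using d0 by simp
    moreover have "(1::real) \<le> of_int H" using H1 by simp
    ultimately have "1 * 1 \<le> real d * of_int H" by (intro mult_mono) auto
    hence "1 \<le> real d * of_int H" by simp
    hence "cmod z \<le> real d * of_int H" using True by linarith
    thus ?thesis unfolding d_def .
  next
    case False
    have "{..d} = insert d {..<d}" by auto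
    hence "0 = (\<Sum>i<d. of_int (coeff p i) * z^i) + z^d" using pe r lc d_def by (simp add: add.commute)
    hence "z^d = - (\<Sum>i<d. of_int (coeff p i) * z^i)" by (simp add: eq_neg_iff_add_eq_0 add.commute)
    hence "cmod z ^ d = cmod (\<Sum>i<d. of_int (coeff p i) * z^i)" by (metis norm_minus_cancel norm_power)
    also have "\<dots> \<le> (\<Sum>i<d. cmod (of_int (coeff p i) * z^i))" by (rule norm_sum)
    also have "\<dots> \<le> (\<Sum>i<d. H * cmod z ^ (d - 1))"
    proof (intro sum_mono)
      fix i assume "i \<in> {..<d}"
      hence "cmod z ^ i \<le> cmod z ^ (d - 1)" using False by (intro power_increasing) auto
      moreover have "\<bar>real_of_int (coeff p i)\<bar> \<le> H" using hc[of i] by simp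
      ultimately show "cmod (of_int (coeff p i) * z^i) \<le> H * cmod z ^ (d - 1)"
        using H1 by (simp add: norm_mult norm_power mult_mono')
    qed
    also have "\<dots> = real d * H * cmod z ^ (d - 1)" by simp
    finally have "cmod z * cmod z ^ (d - 1) \<le> real d * H * cmod z ^ (d - 1)"
      using d0 by (metis power_eq_if mult.commute)
    moreover have "0 < cmod z ^ (d - 1)" using False by (intro zero_less_power) linarith
    ultimately show ?thesis unfolding d_def by simp
  qed
qed

lemma quad_rep:
  fixes a b c :: int and f :: "int poly"
  assumes "degree f \<le> m"
  shows "\<exists>A B::int. \<forall>z::real. of_int a * z^2 + of_int b * z + of_int c = 0 \<longrightarrow>
           of_int a ^ m * poly (of_int_poly f) z = of_int A + of_int B * z"
  using assms
proof (induction f arbitrary: m)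
  case 0
  show ?case by (rule exI[of _ "0::int"], rule exI[of _ "0::int"]) simp
next
  case (pCons d g)
  show ?case
  proof (cases "g = 0")
    case True
    show ?thesis by (rule exI[of _ "a^m * d"], rule exI[of _ "0::int"]) (cases "d = 0"; simp add: True map_poly_pCons)
  next
    case False
    then obtain m' where m': "m = Suc m'" "degree g \<le> m'" using pCons.prems
      by (cases m) auto
    from pCons.IH[OF m'(2)] obtain A B where AB: "\<forall>z::real. of_int a * z^2 + of_int b * z + of_int c = 0 \<longrightarrow>
           of_int a ^ m' * poly (of_int_poly g) z = of_int A + of_int B * z" by blast
    show ?thesis
    proof (rule exI[of _ "a^m * d - B * c"], rule exI[of _ "a * A - b * B"], intro allI impI)
      fix z :: real assume z: "of_int a * z^2 + of_int b * z + of_int c = 0"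
      have z': "of_int a * z^2 = - of_int b * z - of_int c" using z by linarith
      have "of_int a ^ m * poly (of_int_poly (pCons d g)) z =
            of_int a ^ m * of_int d + of_int a * z * (of_int a ^ m' * poly (of_int_poly g) z)"
        using False m'(1) by (simp add: map_poly_pCons algebra_simps)
      also have "\<dots> = of_int a ^ m * of_int d + of_int a * z * (of_int A + of_int B * z)"
        using AB z by simp
      also have "\<dots> = of_int a ^ m * of_int d + of_int a * of_int A * z + of_int B * (of_int a * z^2)"
        by (simp add: algebra_simps power2_eq_square)
      also have "\<dots> = of_int (a^m * d - B * c) + of_int (a * A - b * B) * z"
        using z by (subst z') (simp add: algebra_simps)
      finally show "of_int a ^ m * poly (of_int_poly (pCons d g)) z =
        of_int (a^m * d - B * c) + of_int (a * A - b * B) * z" .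
    qed
  qed
qed

lemma irr_lin:
  fixes x :: real and A B :: int
  assumes "x \<notin> \<rat>" "B \<noteq> 0"
  shows "of_int A + of_int B * x \<noteq> 0"
proof
  assume "of_int A + of_int B * x = 0"
  hence "x = - of_int A / of_int B" using assms(2) by (simp add: field_simps)
  hence "x \<in> \<rat>" by simp
  thus False using assms(1) by simp
qed

lemma quad_eval:
  fixes Qp :: "int poly" and z :: real
  assumes "degree Qp = 2"
  shows "poly (of_int_poly Qp) z = of_int (coeff Qp 2) * z^2 + of_int (coeff Qp 1) * z + of_int (coeff Qp 0)"
proof -
  have "degree (of_int_poly Qp :: real poly) = 2" using assms by simp
  hence "poly (of_int_poly Qp) z = (\<Sum>i\<le>2. of_int (coeff Qp i) * z^i)"
    by (simp add: poly_altdef coeff_map_poly)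
  also have "\<dots> = of_int (coeff Qp 2) * z^2 + of_int (coeff Qp 1) * z + of_int (coeff Qp 0)"
    by (simp add: numeral_2_eq_2 atMost_Suc algebra_simps)
  finally show ?thesis .
qed

lemma height_props:
  assumes "algebraic_integer \<alpha>"
  shows "\<And>i. \<bar>coeff (min_int_poly \<alpha>) i\<bar> \<le> height \<alpha>" and "1 \<le> height \<alpha>"
proof -
  let ?P = "min_int_poly \<alpha>"
  have lc: "lead_coeff ?P = 1" using minpoly_props[OF assms] by blast
  have fin: "finite ((\<lambda>i. \<bar>coeff ?P i\<bar>) ` {..degree ?P})" by simp
  have ge: "\<bar>coeff ?P i\<bar> \<le> height \<alpha>" if "i \<le> degree ?P" for i
    unfolding height_def using that by (intro Max_ge[OF fin]) auto
  show h1: "1 \<le> height \<alpha>" using ge[of "degree ?P"] lc by simp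
  show "\<bar>coeff ?P i\<bar> \<le> height \<alpha>" for i
  proof (cases "i \<le> degree ?P")
    case True thus ?thesis by (rule ge)
  next
    case False thus ?thesis using h1 coeff_eq_0[of ?P i] by simp
  qed
qed

theorem mainTheorem7:
  fixes \<xi> :: real and n :: nat
  assumes "quadratic_irrational \<xi>" and "n \<ge> 1"
  shows "\<exists>c > 0. \<forall>\<alpha> :: complex. \<forall>a :: nat \<Rightarrow> complex.
           algebraic_integer \<alpha> \<and> algebraic_degree \<alpha> = n + 1 \<and>
           complex_of_real \<xi> \<notin> conjugates \<alpha> \<and>
           bij_betw a {1..n+1} (conjugates \<alpha>) \<longrightarrow>
           (MAX i\<in>{1..n}. cmod (complex_of_real \<xi> - a i))
             \<ge> c * real_of_int (height \<alpha>) powr (- 2 / real n)"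
proof -
  from assms(1) obtain Qp :: "int poly" where Qd: "degree Qp = 2" and Qr: "poly (of_int_poly Qp) \<xi> = 0"
    and irr: "\<xi> \<notin> \<rat>" unfolding quadratic_irrational_def by blast
  define qa where "qa = coeff Qp 2"
  define qb where "qb = coeff Qp 1"
  define qc where "qc = coeff Qp 0"
  have "Qp \<noteq> 0" using Qd by auto
  hence "coeff Qp (degree Qp) \<noteq> 0" by simp
  hence a0: "qa \<noteq> 0" unfolding qa_def using Qd by simp
  have hx: "of_int qa * \<xi>^2 + of_int qb * \<xi> + of_int qc = 0"
    using Qr quad_eval[OF Qd, of \<xi>] unfolding qa_def qb_def qc_def by simp
  define \<eta> where "\<eta> = - of_int qb / of_int qa - \<xi>"
  have ra0: "real_of_int qa \<noteq> 0" using a0 by simp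
  have hy: "of_int qa * \<eta>^2 + of_int qb * \<eta> + of_int qc = 0"
  proof -
    have "of_int qa * \<eta>^2 + of_int qb * \<eta> + of_int qc = of_int qa * \<xi>^2 + of_int qb * \<xi> + of_int qc"
      unfolding \<eta>_def using ra0 by (simp add: field_simps power2_eq_square)
    thus ?thesis using hx by simp
  qed
  have prodxy: "of_int qa * \<xi> * \<eta> = of_int qc"
  proof -
    have "of_int qa * \<xi> * \<eta> = - of_int qb * \<xi> - of_int qa * \<xi>^2"
      unfolding \<eta>_def using ra0 by (simp add: field_simps power2_eq_square)
    thus ?thesis using hx by simp
  qed
  have sumxy: "of_int qa * (\<xi> + \<eta>) = - of_int qb"
    unfolding \<eta>_def using ra0 by (simp add: field_simps)
  have irr2: "\<eta> \<notin> \<rat>"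
  proof
    assume "\<eta> \<in> \<rat>"
    hence "- of_int qb / of_int qa - \<eta> \<in> \<rat>" by simp
    moreover have "- of_int qb / of_int qa - \<eta> = \<xi>" unfolding \<eta>_def by simp
    ultimately show False using irr by simp
  qed
  define m where "m = n + 1"
  define D where "D = \<bar>\<xi> - \<eta>\<bar>"
  define E where "E = (\<bar>\<xi>\<bar> + real (n+1)) * (\<bar>\<eta>\<bar> + real (n+1))"
  define K0 where "K0 = 1 / \<bar>real_of_int qa\<bar> ^ (2*m+1)"
  define C where "C = K0 / ((D + 1)^n * E)"
  define c0 where "c0 = min 1 (C powr (1 / real n))"
  have E0: "E > 0" unfolding E_def by (intro mult_pos_pos) auto
  have D0: "D \<ge> 0" unfolding D_def by simp
  have K00: "K0 > 0" unfolding K0_def using a0 by simp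
  have C0: "C > 0" unfolding C_def using K00 E0 D0 by (intro divide_pos_pos mult_pos_pos) auto
  have c00: "c0 > 0" unfolding c0_def using C0 by simp
  have n0: "real n > 0" using assms(2) by simp
  show ?thesis
  proof (rule exI[of _ c0], intro conjI c00 allI impI, elim conjE)
    fix \<alpha> :: complex and aa :: "nat \<Rightarrow> complex"
    assume ai: "algebraic_integer \<alpha>" and deg: "algebraic_degree \<alpha> = n + 1"
      and notc: "complex_of_real \<xi> \<notin> conjugates \<alpha>" and bij: "bij_betw aa {1..n+1} (conjugates \<alpha>)"
    define P where "P = min_int_poly \<alpha>"
    define S where "S = conjugates \<alpha>"
    define Hh where "Hh = real_of_int (height \<alpha>)"
    define \<delta> where "\<delta> = (MAX i\<in>{1..n}. cmod (complex_of_real \<xi> - aa i))"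
    have lcP: "lead_coeff P = 1" using minpoly_props[OF ai] P_def by blast
    have degP: "degree P = n + 1" using deg P_def algebraic_degree_def by simp
    have S_def': "S = {z. poly (of_int_poly P) z = 0}" unfolding S_def P_def conjugates_def by simp
    have cardS: "card S = n + 1" using bij_betw_same_card[OF bij] S_def by simp
    have lcCP: "lead_coeff (of_int_poly P :: complex poly) = 1" using lcP by simp
    have P0: "P \<noteq> 0" using lcP by (metis leading_coeff_0_iff zero_neq_one)
    have degCP: "degree (of_int_poly P :: complex poly) = n + 1" using degP P0 lcP
      by (subst degree_map_poly) simp_all
    have pf: "poly (of_int_poly P) x = (\<Prod>z\<in>S. x - z)" for x :: complex
      unfolding S_def' by (rule poly_prod_roots[OF lcCP]) (use cardS degCP S_def' in simp)
    have pf2: "poly (of_int_poly P) x = (\<Prod>i\<in>{1..n}. x - aa i) * (x - aa (n+1))" for x :: complex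
    proof -
      have "(\<Prod>z\<in>S. x - z) = (\<Prod>i\<in>{1..n+1}. x - aa i)"
        using prod.reindex_bij_betw[OF bij, of "\<lambda>z. x - z"] S_def by simp
      also have "{1..n+1} = insert (n+1) {1..n}" by auto
      also have "(\<Prod>i\<in>insert (n+1) {1..n}. x - aa i) = (x - aa (n+1)) * (\<Prod>i\<in>{1..n}. x - aa i)"
        by (subst prod.insert) auto
      finally show ?thesis using pf by (simp add: mult.commute)
    qed
    have hcoeff: "\<bar>coeff P i\<bar> \<le> height \<alpha>" for i using height_props(1)[OF ai] P_def by simp
    have H1: "1 \<le> Hh" using height_props(2)[OF ai] Hh_def by simp
    have lastS: "aa (n+1) \<in> S" using bij S_def by (auto dest: bij_betwE)
    have rb: "cmod (aa (n+1)) \<le> real (n+1) * Hh"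
      using root_bound[OF lcP hcoeff, of "aa (n+1)"] lastS S_def' degP Hh_def by simp
    have dge: "cmod (complex_of_real \<xi> - aa i) \<le> \<delta>" if "i \<in> {1..n}" for i
      unfolding \<delta>_def using that by (intro Max_ge) auto
    have d0: "0 \<le> \<delta>" using dge[of 1] assms(2) by (meson atLeastAtMost_iff le_refl norm_ge_zero order_trans)
    obtain A B :: int where AB: "\<forall>z::real. of_int qa * z^2 + of_int qb * z + of_int qc = 0 \<longrightarrow>
           of_int qa ^ m * poly (of_int_poly P) z = of_int A + of_int B * z"
      using quad_rep[of P m qa qb qc] degP m_def by auto
    define RP where "RP = (\<lambda>z::real. poly (of_int_poly P) z)"
    have e1: "of_int qa ^ m * RP \<xi> = of_int A + of_int B * \<xi>" using AB hx RP_def by simp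
    have e2: "of_int qa ^ m * RP \<eta> = of_int A + of_int B * \<eta>" using AB hy RP_def by simp
    have RPc: "complex_of_real (RP z) = poly (of_int_poly P) (complex_of_real z)" for z
      unfolding RP_def by (simp add: poly_of_real_int)
    have RPx0: "RP \<xi> \<noteq> 0" using notc RPc[of \<xi>] S_def' S_def by force
    have nz1: "real_of_int A + of_int B * \<xi> \<noteq> 0" and nz2: "real_of_int A + of_int B * \<eta> \<noteq> 0"
    proof -
      have "(real_of_int A + of_int B * \<xi> \<noteq> 0) \<and> (real_of_int A + of_int B * \<eta> \<noteq> 0)"
      proof (cases "B = 0")
        case True
        have "real_of_int qa ^ m * RP \<xi> \<noteq> 0" using RPx0 ra0 by simp
        hence "real_of_int A \<noteq> 0" using e1 True by simp
        thus ?thesis using True by simp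
      next
        case False
        thus ?thesis using irr_lin[OF irr False] irr_lin[OF irr2 False] by simp
      qed
      thus "real_of_int A + of_int B * \<xi> \<noteq> 0" "real_of_int A + of_int B * \<eta> \<noteq> 0" by auto
    qed
    define N where "N = qa * A^2 - qb * A * B + qc * B^2"
    have Neq: "of_int qa * ((of_int A + of_int B * \<xi>) * (of_int A + of_int B * \<eta>)) = real_of_int N"
    proof -
      have "of_int qa * ((of_int A + of_int B * \<xi>) * (of_int A + of_int B * \<eta>)) =
            of_int qa * of_int A ^ 2 + of_int A * of_int B * (of_int qa * (\<xi> + \<eta>)) + of_int B ^ 2 * (of_int qa * \<xi> * \<eta>)"
        by (simp add: algebra_simps power2_eq_square)
      also have "\<dots> = real_of_int N" unfolding N_def using sumxy prodxy by (simp add: algebra_simps power2_eq_square)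
      finally show ?thesis .
    qed
    have "real_of_int N \<noteq> 0" using Neq ra0 nz1 nz2 by (metis mult_eq_0_iff)
    hence "N \<noteq> 0" by simp
    hence "(1::int) \<le> \<bar>N\<bar>" by linarith
    hence N1: "1 \<le> \<bar>real_of_int N\<bar>" by (metis of_int_abs of_int_1_le_iff)
    have "real_of_int N = of_int qa * (of_int qa ^ m * RP \<xi>) * (of_int qa ^ m * RP \<eta>)"
      using Neq e1 e2 by (simp add: algebra_simps)
    also have "\<dots> = of_int qa ^ (2*m+1) * (RP \<xi> * RP \<eta>)"
    proof -
      have pw: "x ^ (2*m+1) = x * (x^m * x^m)" for x :: real by (simp add: mult_2 power_add)
      show ?thesis by (simp only: pw) (simp add: algebra_simps)
    qed
    finally have "1 \<le> \<bar>real_of_int qa\<bar> ^ (2*m+1) * \<bar>RP \<xi> * RP \<eta>\<bar>" using N1 by (simp add: abs_mult power_abs)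
    hence KK: "K0 \<le> \<bar>RP \<xi>\<bar> * \<bar>RP \<eta>\<bar>" unfolding K0_def using a0
      by (simp add: field_simps abs_mult)
    have absRP: "\<bar>RP z\<bar> = (\<Prod>i\<in>{1..n}. cmod (complex_of_real z - aa i)) * cmod (complex_of_real z - aa (n+1))" for z
    proof -
      have "\<bar>RP z\<bar> = cmod (complex_of_real (RP z))" by simp
      also have "\<dots> = cmod (poly (of_int_poly P) (complex_of_real z))" using RPc by simp
      also have "\<dots> = (\<Prod>i\<in>{1..n}. cmod (complex_of_real z - aa i)) * cmod (complex_of_real z - aa (n+1))"
        using pf2 by (simp add: norm_mult prod_norm)
      finally show ?thesis .
    qed
    have b1: "(\<Prod>i\<in>{1..n}. cmod (complex_of_real \<xi> - aa i)) \<le> \<delta> ^ n"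
    proof -
      have "(\<Prod>i\<in>{1..n}. cmod (complex_of_real \<xi> - aa i)) \<le> (\<Prod>i\<in>{1..n}. \<delta>)"
        using dge by (intro prod_mono) auto
      thus ?thesis by simp
    qed
    have b2: "(\<Prod>i\<in>{1..n}. cmod (complex_of_real \<eta> - aa i)) \<le> (D + \<delta>) ^ n"
    proof -
      have "cmod (complex_of_real \<eta> - aa i) \<le> D + \<delta>" if "i \<in> {1..n}" for i
      proof -
        have "cmod (complex_of_real \<eta> - aa i) \<le> cmod (complex_of_real \<eta> - complex_of_real \<xi>) + cmod (complex_of_real \<xi> - aa i)"
          using norm_triangle_ineq[of "complex_of_real \<eta> - complex_of_real \<xi>" "complex_of_real \<xi> - aa i"] by simp
        also have "cmod (complex_of_real \<eta> - complex_of_real \<xi>) = D" unfolding D_def of_real_diff[symmetric] norm_of_real by (rule abs_minus_commute)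
        finally show ?thesis using dge[OF that] by linarith
      qed
      hence "(\<Prod>i\<in>{1..n}. cmod (complex_of_real \<eta> - aa i)) \<le> (\<Prod>i\<in>{1..n}. D + \<delta>)"
        by (intro prod_mono) auto
      thus ?thesis by simp
    qed
    have b3: "cmod (complex_of_real z - aa (n+1)) \<le> (\<bar>z\<bar> + real (n+1)) * Hh" for z
    proof -
      have "cmod (complex_of_real z - aa (n+1)) \<le> \<bar>z\<bar> + cmod (aa (n+1))"
        using norm_triangle_ineq4[of "complex_of_real z" "aa (n+1)"] by simp
      also have "\<dots> \<le> \<bar>z\<bar> * Hh + real (n+1) * Hh"
      proof -
        have "\<bar>z\<bar> * 1 \<le> \<bar>z\<bar> * Hh" by (rule mult_left_mono[OF H1]) simp
        thus ?thesis using rb by linarith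
      qed
      finally show ?thesis by (simp add: algebra_simps)
    qed
    have main: "K0 \<le> \<delta> ^ n * (D + \<delta>) ^ n * E * Hh^2"
    proof -
      have "K0 \<le> \<bar>RP \<xi>\<bar> * \<bar>RP \<eta>\<bar>" by (rule KK)
      also have "\<dots> \<le> (\<delta> ^ n * ((\<bar>\<xi>\<bar> + real (n+1)) * Hh)) * ((D + \<delta>) ^ n * ((\<bar>\<eta>\<bar> + real (n+1)) * Hh))"
      proof (rule mult_mono)
        show "\<bar>RP \<xi>\<bar> \<le> \<delta> ^ n * ((\<bar>\<xi>\<bar> + real (n+1)) * Hh)"
          unfolding absRP by (rule mult_mono[OF b1 b3]) (auto simp: d0)
        show "\<bar>RP \<eta>\<bar> \<le> (D + \<delta>) ^ n * ((\<bar>\<eta>\<bar> + real (n+1)) * Hh)"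
          unfolding absRP by (rule mult_mono[OF b2 b3]) (auto simp: d0 D0)
        show "0 \<le> \<delta> ^ n * ((\<bar>\<xi>\<bar> + real (n+1)) * Hh)" using d0 H1 by simp
      qed simp
      also have "\<dots> = \<delta> ^ n * (D + \<delta>) ^ n * E * Hh^2" unfolding E_def by (simp add: algebra_simps power2_eq_square)
      finally show ?thesis .
    qed
    have "Hh powr (- 2 / real n) \<le> Hh powr 0"
      using H1 n0 by (intro powr_mono) (auto simp: divide_nonpos_pos)
    hence Hp: "Hh powr (- 2 / real n) \<le> 1" using H1 by simp
    show "c0 * Hh powr (- 2 / real n) \<le> \<delta>" unfolding Hh_def[symmetric] \<delta>_def[symmetric]
    proof (cases "\<delta> \<ge> 1")
      case True
      have "c0 * Hh powr (- 2 / real n) \<le> 1 * 1" using Hp c00 unfolding c0_def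
        by (intro mult_mono) auto
      thus ?thesis using True by simp
    next
      case False
      have "K0 \<le> \<delta> ^ n * (D + 1) ^ n * E * Hh^2"
      proof -
        have "(D + \<delta>) ^ n \<le> (D + 1) ^ n" using False d0 D0 by (intro power_mono) auto
        hence "\<delta> ^ n * (D + \<delta>) ^ n * E * Hh^2 \<le> \<delta> ^ n * (D + 1) ^ n * E * Hh^2"
          using d0 E0 by (intro mult_right_mono mult_left_mono) auto
        thus ?thesis using main by linarith
      qed
      hence Cle: "C * Hh powr (-2) \<le> \<delta> ^ n"
        unfolding C_def using E0 D0 H1
        by (simp add: field_simps powr_minus powr_realpow)
      have dpos: "\<delta> > 0"
      proof (rule ccontr)
        assume "\<not> \<delta> > 0"
        hence "\<delta> = 0" using d0 by simp
        moreover have "n \<noteq> 0" using assms(2) by simp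
        ultimately have "\<delta> ^ n = 0" by simp
        hence "C * Hh powr (-2) \<le> 0" using Cle by linarith
        moreover have "C * Hh powr (-2) > 0" using C0 H1 by simp
        ultimately show False by simp
      qed
      have "(C * Hh powr (-2)) powr (1 / real n) \<le> (\<delta> ^ n) powr (1 / real n)"
        using Cle C0 H1 by (intro powr_mono2) auto
      also have "(\<delta> ^ n) powr (1 / real n) = \<delta>"
        using dpos n0 by (simp add: powr_realpow[symmetric] powr_powr)
      also have "(C * Hh powr (-2)) powr (1 / real n) = C powr (1 / real n) * Hh powr (- 2 / real n)"
        using C0 H1 by (simp add: powr_mult powr_powr)
      finally have "C powr (1 / real n) * Hh powr (- 2 / real n) \<le> \<delta>" .
      moreover have "c0 * Hh powr (- 2 / real n) \<le> C powr (1 / real n) * Hh powr (- 2 / real n)"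
        unfolding c0_def by (intro mult_right_mono) auto
      ultimately show ?thesis by linarith
    qed
  qed
qed
end
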